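(* Let $\mathbf{w_0}=(s_1s_2\cdots s_{n-1})(s_1s_2\cdots s_{n-2})\cdots(s_1s_2)(s_1)$, viewed as a sequence of $n-1$ runs (the $k$-th run being $s_1s_2\cdots s_{n-k}$). Let $\mathbf{w}$ be the positive distinguished subexpression in $\mathbf{w_0}$ for some $w\in S_n$. If, for some $k\ge 2$, $\mathbf{w}$ uses the transposition $s_i$ from the $k$-th run of $\mathbf{w_0}$, then $\mathbf{w}$ also uses the transposition $s_{i+1}$ from the $(k-1)$-st run of $\mathbf{w_0}$.
   Context: $s_i=(i,\,i+1)\in S_n$ are simple transpositions; $\ell(u)$ is the length of $u$ (minimal number of simple transpositions in an expression for $u$); an expression is reduced if it uses $\ell(u)$ transpositions. $v\le w$ in Bruhat order if some reduced expression for $w$ contains a reduced subexpression for $v$. Given a reduced expression $\mathbf{w}=s_{i_1}\cdots s_{i_k}$ for $w$ and $v\le w$, a reduced subexpression $\mathbf{v}=s_{i_{j_1}}\cdots s_{i_{j_m}}$ ($1\le j_1<\dots<j_m\le k$) for $v$ is positive distinguished if, for every $1\le r\le m+1$ and every $p$ with $j_{r-1}\le p<j_r$ (with conventions $j_0=0$, $j_{m+1}=k+1$) such that $\ell(s_{i_p}s_{i_{j_r}}\cdots s_{i_{j_m}})<\ell(s_{i_{j_r}}\cdots s_{i_{j_m}})$, one has $p=j_{r-1}$. For every $v\le w$ and reduced expression of $w$ there is a unique positive distinguished subexpression for $v$ (informally, the leftmost reduced subexpression). *)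

theory Defs
  imports "HOL-Combinatorics.Combinatorics"
begin

text \<open>Permutations of {1..n} are functions nat => nat (permuting {1..n});
  products are function composition, u v = u o v.
  A word is a list of indices [i_1,...,i_k] standing for s_{i_1} ... s_{i_k}.\<close>

definition stransp :: "nat \<Rightarrow> nat \<Rightarrow> nat" where
  "stransp i = transpose i (Suc i)"

definition word_eval :: "nat list \<Rightarrow> nat \<Rightarrow> nat" where
  "word_eval ws = foldr (\<lambda>i f. stransp i \<circ> f) ws id"

definition perm_length :: "nat \<Rightarrow> (nat \<Rightarrow> nat) \<Rightarrow> nat" where
  "perm_length n u = (LEAST k. \<exists>ws. length ws = k \<and> set ws \<subseteq> {1..<n} \<and> word_eval ws = u)"

text \<open>Positive distinguished subexpression. The ambient reduced word is ws
  (positions 1..k, ws!(p-1) is i_p); the subexpression is given by the strictly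
  increasing list js = [j_1,...,j_m] of positions.\<close>
definition sub_word :: "nat list \<Rightarrow> nat list \<Rightarrow> nat list" where
  "sub_word ws js = map (\<lambda>j. ws ! (j - 1)) js"

definition is_pos_dist_subexpr :: "nat \<Rightarrow> nat list \<Rightarrow> (nat \<Rightarrow> nat) \<Rightarrow> nat list \<Rightarrow> bool" where
  "is_pos_dist_subexpr n ws v js \<longleftrightarrow>
     (let k = length ws; m = length js;
          jj = (\<lambda>r. if r = 0 then 0 else if r = m + 1 then k + 1 else js ! (r - 1));
          suf = (\<lambda>r. word_eval (sub_word ws (drop (r - 1) js)))
      in sorted_wrt (<) js \<and> set js \<subseteq> {1..k}
         \<and> word_eval (sub_word ws js) = v \<and> m = perm_length n v
         \<and> (\<forall>r\<in>{1..m+1}. \<forall>p. jj (r - 1) \<le> p \<and> p < jj r \<and>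
              perm_length n (stransp (ws ! (p - 1)) \<circ> suf r) < perm_length n (suf r)
              \<longrightarrow> p = jj (r - 1)))"

definition w0_word :: "nat \<Rightarrow> nat list" where
  "w0_word n = concat (map (\<lambda>k. [1..<n - k + 1]) [1..<n])"

text \<open>1-based position in w0_word n of the letter s_i of the k-th run.\<close>
definition run_pos :: "nat \<Rightarrow> nat \<Rightarrow> nat \<Rightarrow> nat" where
  "run_pos n k i = (\<Sum>l=1..<k. n - l) + i"

end

theory Submission
  imports Defs
begin

definition Inv :: "nat \<Rightarrow> (nat \<Rightarrow> nat) \<Rightarrow> (nat \<times> nat) set" where
  "Inv n u = {(a,b). a \<in> {1..n} \<and> b \<in> {1..n} \<and> a < b \<and> u b < u a}"

lemma finite_Inv: "finite (Inv n u)"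
  by (rule finite_subset[of _ "{1..n} \<times> {1..n}"]) (auto simp: Inv_def)

lemma stransp_perm: "1 \<le> j \<Longrightarrow> j < n \<Longrightarrow> stransp j permutes {1..n}"
  unfolding stransp_def by (rule permutes_swap_id) auto

lemma word_eval_Nil[simp]: "word_eval [] = id"
  by (simp add: word_eval_def)

lemma word_eval_Cons[simp]: "word_eval (j # ws) = stransp j \<circ> word_eval ws"
  by (simp add: word_eval_def)

lemma word_eval_append: "word_eval (a @ b) = word_eval a \<circ> word_eval b"
  by (induction a) (auto simp: o_assoc)

lemma word_eval_perm: "set ws \<subseteq> {1..<n} \<Longrightarrow> word_eval ws permutes {1..n}"
proof (induction ws)
  case Nil show ?case unfolding word_eval_Nil by (rule permutes_id)
next
  case (Cons j ws)
  then have "stransp j \<circ> word_eval ws permutes {1..n}"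
    using permutes_compose[OF _ stransp_perm[of j n]] by auto
  then show ?case by (simp only: word_eval_Cons)
qed

lemma stransp_invol[simp]: "stransp j \<circ> stransp j = id"
  by (simp add: stransp_def)

lemma stransp_invol'[simp]: "stransp j (stransp j x) = x"
  by (simp add: stransp_def)

lemma inv_stransp[simp]: "inv (stransp j) = stransp j"
  by (simp add: stransp_def)

lemma stransp_order:
  assumes "x \<noteq> y" "\<not> (x = j \<and> y = Suc j)" "\<not> (x = Suc j \<and> y = j)"
  shows "(stransp j x < stransp j y) = (x < y)"
  using assms unfolding stransp_def transpose_def by auto

lemma Inv_swap:
  assumes u: "u permutes {1..n}" and j: "1 \<le> j" "j < n" and d: "inv u (Suc j) < inv u j"
  shows "Inv n u = insert (inv u (Suc j), inv u j) (Inv n (stransp j \<circ> u))"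
    and "(inv u (Suc j), inv u j) \<notin> Inv n (stransp j \<circ> u)"
proof -
  define a0 where "a0 = inv u j"
  define b0 where "b0 = inv u (Suc j)"
  have ua0: "u a0 = j" and ub0: "u b0 = Suc j"
    using permutes_inverses(1)[OF u] a0_def b0_def by auto
  have iu: "inv u permutes {1..n}" using permutes_inv[OF u] .
  have a0r: "a0 \<in> {1..n}" using permutes_in_image[OF iu, of j] j a0_def by auto
  have b0r: "b0 \<in> {1..n}" using permutes_in_image[OF iu, of "Suc j"] j b0_def by auto
  have injo: "inj u" using u permutes_inj by blast
  have key: "(stransp j (u b) < stransp j (u a)) = (u b < u a)"
    if "(a,b) \<noteq> (b0,a0)" "a < b" for a b
  proof (rule stransp_order)
    show "u b \<noteq> u a" using injo that(2) by (metis inj_eq less_irrefl)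
    show "\<not> (u b = j \<and> u a = Suc j)"
      using that ua0 ub0 injo by (metis inj_eq)
    show "\<not> (u b = Suc j \<and> u a = j)"
      using that ua0 ub0 injo d a0_def b0_def by (metis inj_eq less_asym)
  qed
  have nin: "(b0, a0) \<notin> Inv n (stransp j \<circ> u)"
    using ua0 ub0 by (simp add: Inv_def stransp_def)
  have inn: "(b0, a0) \<in> Inv n u"
    using ua0 ub0 a0r b0r d a0_def b0_def by (simp add: Inv_def)
  show "Inv n u = insert (inv u (Suc j), inv u j) (Inv n (stransp j \<circ> u))"
    unfolding a0_def[symmetric] b0_def[symmetric]
  proof (intro set_eqI iffI)
    fix x assume x: "x \<in> Inv n u"
    obtain a b where ab: "x = (a,b)" by (cases x)
    show "x \<in> insert (b0, a0) (Inv n (stransp j \<circ> u))"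
    proof (cases "(a,b) = (b0,a0)")
      case True then show ?thesis using ab by simp
    next
      case False then show ?thesis using key[OF False] x ab by (auto simp: Inv_def)
    qed
  next
    fix x assume x: "x \<in> insert (b0, a0) (Inv n (stransp j \<circ> u))"
    obtain a b where ab: "x = (a,b)" by (cases x)
    show "x \<in> Inv n u"
    proof (cases "(a,b) = (b0,a0)")
      case True then show ?thesis using ab inn by simp
    next
      case False then show ?thesis using key[OF False] x ab by (auto simp: Inv_def)
    qed
  qed
  show "(inv u (Suc j), inv u j) \<notin> Inv n (stransp j \<circ> u)"
    using nin a0_def b0_def by simp
qed

lemma card_Inv_down:
  assumes u: "u permutes {1..n}" and j: "1 \<le> j" "j < n" and d: "inv u (Suc j) < inv u j"
  shows "card (Inv n (stransp j \<circ> u)) + 1 = card (Inv n u)"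
  using Inv_swap[OF assms] finite_Inv by simp

lemma inv_comp_stransp:
  assumes u: "u permutes {1..n}"
  shows "inv (stransp j \<circ> u) = inv u \<circ> stransp j"
proof -
  have "bij (stransp j)" by (simp add: stransp_def)
  moreover have "bij u" using u permutes_bij by blast
  ultimately show ?thesis by (simp add: o_inv_distrib)
qed

lemma card_Inv_up:
  assumes u: "u permutes {1..n}" and j: "1 \<le> j" "j < n" and d: "\<not> inv u (Suc j) < inv u j"
  shows "card (Inv n (stransp j \<circ> u)) = card (Inv n u) + 1"
proof -
  let ?u = "stransp j \<circ> u"
  have u': "?u permutes {1..n}" using permutes_compose[OF u stransp_perm[OF j]] .
  have ne: "inv u (Suc j) \<noteq> inv u j"
    using permutes_inj[OF permutes_inv[OF u]] by (auto dest: injD)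
  have dd: "inv ?u (Suc j) < inv ?u j"
    using d ne inv_comp_stransp[OF u, of j] by (simp add: stransp_def)
  have e: "stransp j \<circ> (stransp j \<circ> u) = u" by (simp add: fun_eq_iff)
  from card_Inv_down[OF u' j dd] show ?thesis unfolding e by simp
qed

lemma card_Inv_word: "set ws \<subseteq> {1..<n} \<Longrightarrow> card (Inv n (word_eval ws)) \<le> length ws"
proof (induction ws)
  case Nil
  have "Inv n (word_eval []) = {}" by (auto simp: Inv_def)
  then show ?case by (simp only: card.empty)
next
  case (Cons j ws)
  have u: "word_eval ws permutes {1..n}" using Cons.prems word_eval_perm by simp
  have j: "1 \<le> j" "j < n" using Cons.prems by auto
  have "card (Inv n (stransp j \<circ> word_eval ws)) \<le> Suc (length ws)"
    using card_Inv_down[OF u j] card_Inv_up[OF u j] Cons by (cases "inv (word_eval ws) (Suc j) < inv (word_eval ws) j") auto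
  then show ?case by (simp only: word_eval_Cons list.size)
qed

lemma descent_exists:
  assumes u: "u permutes {1..n}" and ne: "u \<noteq> id"
  shows "\<exists>j. 1 \<le> j \<and> j < n \<and> inv u (Suc j) < inv u j"
proof (rule ccontr)
  assume "\<not> ?thesis"
  then have h: "\<And>j. 1 \<le> j \<Longrightarrow> j < n \<Longrightarrow> inv u j \<le> inv u (Suc j)" by (meson not_less)
  have iu: "inv u permutes {1..n}" using permutes_inv[OF u] .
  have injo: "inj (inv u)" using iu permutes_inj by blast
  have "i \<le> inv u i" if "i \<in> {1..n}" for i
    using that
  proof (induction i)
    case 0 then show ?case by simp
  next
    case (Suc i)
    show ?case
    proof (cases "i = 0")
      case True
      then show ?thesis using permutes_in_image[OF iu, of "Suc i"] Suc.prems by auto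
    next
      case False
      then have "i \<le> inv u i" using Suc by auto
      moreover have "inv u i \<le> inv u (Suc i)" using h[of i] False Suc.prems by auto
      moreover have "inv u i \<noteq> inv u (Suc i)" using injo by (auto dest: injD)
      ultimately show ?thesis by simp
    qed
  qed
  then have "inv u = id" using permutes_natset_ge[OF iu] by auto
  then have "u = id"
    by (metis inv_id inv_inv_eq permutes_bij u)
  with ne show False by simp
qed

lemma word_exists:
  "u permutes {1..n} \<Longrightarrow> \<exists>ws. length ws = card (Inv n u) \<and> set ws \<subseteq> {1..<n} \<and> word_eval ws = u"
proof (induction "card (Inv n u)" arbitrary: u)
  case 0
  have "u = id"
  proof (rule ccontr)
    assume "u \<noteq> id"
    then obtain j where j: "1 \<le> j" "j < n" "inv u (Suc j) < inv u j"
      using descent_exists[OF 0(2)] by blast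
    from card_Inv_down[OF 0(2) j] 0(1) show False by simp
  qed
  then show ?case using 0 by (intro exI[of _ "[]"]) simp
next
  case (Suc N)
  have "u \<noteq> id"
  proof
    assume "u = id"
    then have "Inv n u = {}" by (auto simp: Inv_def)
    with Suc(2) show False by simp
  qed
  then obtain j where j: "1 \<le> j" "j < n" "inv u (Suc j) < inv u j"
    using descent_exists[OF Suc(3)] by blast
  let ?u = "stransp j \<circ> u"
  have u': "?u permutes {1..n}" using permutes_compose[OF Suc(3) stransp_perm[OF j(1,2)]] .
  have "N = card (Inv n ?u)" using card_Inv_down[OF Suc(3) j] Suc(2) by simp
  from Suc(1)[OF this u'] obtain ws where ws: "length ws = card (Inv n ?u)" "set ws \<subseteq> {1..<n}" "word_eval ws = ?u"
    by blast
  show ?case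
    using ws j card_Inv_down[OF Suc(3) j] by (intro exI[of _ "j # ws"]) (auto simp: o_assoc[symmetric])
qed

lemma perm_length_eq:
  assumes u: "u permutes {1..n}"
  shows "perm_length n u = card (Inv n u)"
  unfolding perm_length_def
proof (rule Least_equality)
  show "\<exists>ws. length ws = card (Inv n u) \<and> set ws \<subseteq> {1..<n} \<and> word_eval ws = u"
    using word_exists[OF u] .
next
  fix y assume "\<exists>ws. length ws = y \<and> set ws \<subseteq> {1..<n} \<and> word_eval ws = u"
  then show "card (Inv n u) \<le> y" using card_Inv_word by blast
qed

lemma perm_length_le: "set ws \<subseteq> {1..<n} \<Longrightarrow> perm_length n (word_eval ws) \<le> length ws"
  using perm_length_eq[OF word_eval_perm] card_Inv_word by simp

lemma descent_iff:
  assumes u: "u permutes {1..n}" and j: "1 \<le> j" "j < n"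
  shows "perm_length n (stransp j \<circ> u) < perm_length n u \<longleftrightarrow> inv u (Suc j) < inv u j"
proof -
  have u': "stransp j \<circ> u permutes {1..n}" using permutes_compose[OF u stransp_perm[OF j]] .
  show ?thesis
    using perm_length_eq[OF u] perm_length_eq[OF u'] card_Inv_down[OF u j] card_Inv_up[OF u j]
    by (cases "inv u (Suc j) < inv u j") auto
qed


lemma w0_letters: "set (w0_word n) \<subseteq> {1..<n}"
  by (auto simp: w0_word_def)

lemma w0_nth:
  assumes "1 \<le> k" "k < n" "1 \<le> t" "t \<le> n - k"
  shows "run_pos n k t - 1 < length (w0_word n) \<and> w0_word n ! (run_pos n k t - 1) = t"
proof -
  define f where "f = (\<lambda>k. [1..<n - k + 1])"
  have split: "[1..<n] = [1..<k] @ k # [Suc k..<n]"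
  proof -
    have "[1..<n] = [1..<k] @ [k..<k + (n - k)]"
      using upt_add_eq_append[of 1 k "n - k"] assms by simp
    also have "[k..<k + (n - k)] = k # [Suc k..<n]" using assms upt_conv_Cons[of k n] by simp
    finally show ?thesis .
  qed
  have w: "w0_word n = concat (map f [1..<k]) @ f k @ concat (map f [Suc k..<n])"
    unfolding w0_word_def f_def split by simp
  have len: "length (concat (map f [1..<k])) = (\<Sum>l=1..<k. n - l)"
    by (simp add: f_def length_concat comp_def sum_set_upt_conv_sum_list_nat[symmetric] del: upt_Suc)
  have rp: "run_pos n k t - 1 = length (concat (map f [1..<k])) + (t - 1)"
    using len assms by (simp add: run_pos_def)
  have fk: "f k ! (t - 1) = t" "t - 1 < length (f k)"
    using assms by (auto simp: f_def simp del: upt_Suc)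
  show ?thesis unfolding w rp using fk by (simp add: nth_append)
qed

lemma run_pos_prev:
  assumes "2 \<le> k"
  shows "run_pos n k t = run_pos n (k - 1) 0 + (n - (k - 1)) + t"
proof -
  obtain m where m: "k = Suc m" "1 \<le> m" using assms by (cases k) auto
  show ?thesis unfolding run_pos_def m using m(2) by (simp add: sum.atLeastLessThan_Suc)
qed

lemma run_pos_0: "run_pos n k t = run_pos n k 0 + t"
  by (simp add: run_pos_def)

lemma sorted_split:
  fixes js :: "nat list"
  shows "sorted_wrt (<) js \<Longrightarrow> js = filter (\<lambda>j. j < p) js @ filter (\<lambda>j. p \<le> j) js"
proof (induction js)
  case Nil then show ?case by simp
next
  case (Cons a rest)
  show ?case
  proof (cases "a < p")
    case True
    have IH: "rest = filter (\<lambda>j. j < p) rest @ filter (\<lambda>j. p \<le> j) rest" using Cons by simp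
    have "filter (\<lambda>j. j<p) (a#rest) = a # filter (\<lambda>j. j<p) rest" using True by simp
    moreover have "filter (\<lambda>j. p\<le>j) (a#rest) = filter (\<lambda>j. p \<le> j) rest" using True by simp
    ultimately show ?thesis by (metis IH append_Cons)
  next
    case False
    then have "\<forall>x\<in>set rest. p \<le> x" using Cons.prems by auto
    then have "filter (\<lambda>j. j < p) rest = []" "filter (\<lambda>j. p \<le> j) rest = rest"
      by (auto simp: filter_empty_conv)
    then show ?thesis using False by simp
  qed
qed

lemma F_step:
  "sorted_wrt (<) js \<Longrightarrow> filter (\<lambda>j. p \<le> j) js =
     (if p \<in> set js then p # filter (\<lambda>j. Suc p \<le> j) js else filter (\<lambda>j. Suc p \<le> j) js)"
proof (induction js)
  case Nil then show ?case by simp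
next
  case (Cons a rest)
  have IH: "filter (\<lambda>j. p \<le> j) rest =
     (if p \<in> set rest then p # filter (\<lambda>j. Suc p \<le> j) rest else filter (\<lambda>j. Suc p \<le> j) rest)"
    using Cons by simp
  have gt: "\<forall>x\<in>set rest. a < x" using Cons.prems by simp
  show ?case
  proof (cases "a < p")
    case True then show ?thesis using IH by auto
  next
    case False
    show ?thesis
    proof (cases "a = p")
      case True
      then have "filter (\<lambda>j. p \<le> j) rest = rest" "filter (\<lambda>j. Suc p \<le> j) rest = rest"
        using gt by (auto simp: filter_id_conv)
      then show ?thesis using True by simp
    next
      case False
      then have "p \<notin> set rest" using gt \<open>\<not> a < p\<close> by force
      then show ?thesis using False \<open>\<not> a < p\<close> IH by auto
    qed
  qed
qed

lemma sub_word_append: "sub_word ws (a @ b) = sub_word ws a @ sub_word ws b"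
  by (simp add: sub_word_def)

lemma sub_word_Cons: "sub_word ws (p # a) = ws ! (p - 1) # sub_word ws a"
  by (simp add: sub_word_def)

lemma sub_word_set: "set js \<subseteq> {1..length ws} \<Longrightarrow> set (sub_word ws js) \<subseteq> set ws"
proof
  fix x assume h: "set js \<subseteq> {1..length ws}" and x: "x \<in> set (sub_word ws js)"
  then obtain j where j: "j \<in> set js" "x = ws ! (j - 1)" by (auto simp: sub_word_def)
  then have "j - 1 < length ws" using h by force
  then show "x \<in> set ws" using j by simp
qed

definition sortstep :: "nat \<Rightarrow> (nat \<Rightarrow> nat) \<Rightarrow> nat \<Rightarrow> nat" where
  "sortstep j r = (if r (Suc j) < r j then r \<circ> stransp j else r)"

definition Qc :: "(nat \<Rightarrow> nat) \<Rightarrow> nat \<Rightarrow> bool" where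
  "Qc r c = (\<forall>a. 1 \<le> a \<and> a < c \<longrightarrow> r a \<le> r c)"

lemma Q_pres:
  assumes "Qc r c" "1 \<le> j" "Suc j \<noteq> c" "j \<noteq> c"
  shows "Qc (sortstep j r) c"
proof (cases "r (Suc j) < r j")
  case False then show ?thesis using assms by (simp add: sortstep_def)
next
  case True
  have sc: "stransp j c = c" using assms by (simp add: stransp_def)
  show ?thesis unfolding Qc_def sortstep_def using True
  proof (intro allI impI, simp only: if_True o_apply sc)
    fix a assume a: "1 \<le> a \<and> a < c"
    show "r (stransp j a) \<le> r c"
    proof (cases "a = j \<or> a = Suc j")
      case True
      have Q: "\<And>b. 1 \<le> b \<Longrightarrow> b < c \<Longrightarrow> r b \<le> r c" using assms(1) unfolding Qc_def by blast
      show ?thesis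
      proof (cases "a = j")
        case True
        then have "stransp j a = Suc j" by (simp add: stransp_def)
        moreover have "Suc j < c" using True a assms(3) by simp
        ultimately show ?thesis using Q[of "Suc j"] by simp
      next
        case False
        then have "a = Suc j" using \<open>a = j \<or> a = Suc j\<close> by simp
        then have "stransp j a = j" by (simp add: stransp_def)
        moreover have "j < c" using \<open>a = Suc j\<close> a by simp
        ultimately show ?thesis using Q[of j] assms(2) by simp
      qed
    next
      case False
      then have "stransp j a = a" by (simp add: stransp_def)
      then show ?thesis using a assms unfolding Qc_def by auto
    qed
  qed
qed

lemma Q_step:
  assumes "Qc r c" "1 \<le> c"
  shows "Qc (sortstep c r) (Suc c)"
proof (cases "r (Suc c) < r c")
  case False then show ?thesis using assms unfolding Qc_def sortstep_def
    by (auto simp: less_Suc_eq)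
next
  case True
  show ?thesis unfolding Qc_def sortstep_def using True
  proof (intro allI impI, simp only: if_True o_apply)
    fix a assume a: "1 \<le> a \<and> a < Suc c"
    show "r (stransp c a) \<le> r (stransp c (Suc c))"
    proof (cases "a = c")
      case True then show ?thesis using \<open>r (Suc c) < r c\<close> by (simp add: stransp_def)
    next
      case False
      then have "stransp c a = a" using a by (simp add: stransp_def)
      then show ?thesis using a False assms unfolding Qc_def by (simp add: stransp_def)
    qed
  qed
qed


definition Rf :: "nat list \<Rightarrow> nat list \<Rightarrow> nat \<Rightarrow> nat \<Rightarrow> nat" where
  "Rf ws js p = word_eval (sub_word ws (filter (\<lambda>j. p \<le> j) js))"

lemma pds_unfold:
  assumes "is_pos_dist_subexpr n ws v js"
  defines "jj \<equiv> (\<lambda>r. if r = 0 then 0 else if r = length js + 1 then length ws + 1 else js ! (r - 1))"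
    and "suf \<equiv> (\<lambda>r. word_eval (sub_word ws (drop (r - 1) js)))"
  shows "sorted_wrt (<) js" "set js \<subseteq> {1..length ws}" "word_eval (sub_word ws js) = v"
    "length js = perm_length n v"
    "\<forall>r\<in>{1..length js+1}. \<forall>p. jj (r - 1) \<le> p \<and> p < jj r \<and>
              perm_length n (stransp (ws ! (p - 1)) \<circ> suf r) < perm_length n (suf r)
              \<longrightarrow> p = jj (r - 1)"
  using assms(1) unfolding is_pos_dist_subexpr_def Let_def jj_def suf_def by blast+

lemma lenR:
  assumes pds: "is_pos_dist_subexpr n ws v js" and lt: "set ws \<subseteq> {1..<n}"
  shows "perm_length n (Rf ws js p) = length (filter (\<lambda>j. p \<le> j) js)"
proof -
  note P = pds_unfold[OF pds]
  define A where "A = filter (\<lambda>j. j < p) js"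
  define B where "B = filter (\<lambda>j. p \<le> j) js"
  have js: "js = A @ B" using sorted_split[OF P(1)] A_def B_def by simp
  have sA: "set (sub_word ws A) \<subseteq> {1..<n}" using sub_word_set[of A ws] P(2) js lt by auto
  have sB: "set (sub_word ws B) \<subseteq> {1..<n}" using sub_word_set[of B ws] P(2) js lt by auto
  have le: "perm_length n (Rf ws js p) \<le> length B"
    using perm_length_le[OF sB] by (simp add: Rf_def B_def sub_word_def)
  show ?thesis
  proof (rule ccontr)
    assume "perm_length n (Rf ws js p) \<noteq> length (filter (\<lambda>j. p \<le> j) js)"
    with le have lt2: "perm_length n (Rf ws js p) < length B" using B_def by simp
    have perm: "Rf ws js p permutes {1..n}" unfolding Rf_def B_def[symmetric] using word_eval_perm[OF sB] .
    obtain ws' where ws': "length ws' = perm_length n (Rf ws js p)" "set ws' \<subseteq> {1..<n}"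
      "word_eval ws' = Rf ws js p"
      using word_exists[OF perm] perm_length_eq[OF perm] by auto
    have RB: "Rf ws js p = word_eval (sub_word ws B)" by (simp add: Rf_def B_def)
    have "v = word_eval (sub_word ws A) \<circ> word_eval (sub_word ws B)"
      using P(3) js by (metis sub_word_append word_eval_append)
    then have ev: "word_eval (sub_word ws A @ ws') = v"
      by (simp add: word_eval_append ws'(3) RB)
    have "perm_length n v \<le> length (sub_word ws A @ ws')"
      using perm_length_le[of "sub_word ws A @ ws'" n] sA ws'(2) ev by simp
    also have "\<dots> < length A + length B" using ws'(1) lt2 by (simp add: sub_word_def)
    also have "\<dots> = perm_length n v" using P(4) js by simp
    finally show False by simp
  qed
qed

lemma nondesc:
  assumes pds: "is_pos_dist_subexpr n ws v js" and lt: "set ws \<subseteq> {1..<n}"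
    and p: "1 \<le> p" "p \<le> length ws" "p \<notin> set js"
  shows "\<not> perm_length n (stransp (ws ! (p - 1)) \<circ> Rf ws js p) < perm_length n (Rf ws js p)"
proof
  assume H: "perm_length n (stransp (ws ! (p - 1)) \<circ> Rf ws js p) < perm_length n (Rf ws js p)"
  define jj where "jj \<equiv> (\<lambda>r. if r = 0 then 0 else if r = length js + 1 then length ws + 1 else js ! (r - 1))"
  define suf where "suf \<equiv> (\<lambda>r. word_eval (sub_word ws (drop (r - 1) js)))"
  note P = pds_unfold[OF pds, folded jj_def suf_def]
  define A where "A = filter (\<lambda>j. j < p) js"
  define B where "B = filter (\<lambda>j. p \<le> j) js"
  have js: "js = A @ B" using sorted_split[OF P(1)] A_def B_def by simp
  define rr where "rr = Suc (length A)"
  have rr: "rr \<in> {1..length js + 1}" using js rr_def by simp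
  have j1: "jj (rr - 1) < p"
  proof (cases "length A = 0")
    case True then show ?thesis using p rr_def jj_def by simp
  next
    case False
    then have "jj (rr - 1) = A ! (length A - 1)" using rr_def jj_def js by (simp add: nth_append)
    moreover have "A ! (length A - 1) \<in> set A" using False by simp
    ultimately show ?thesis using A_def by auto
  qed
  have j2: "p < jj rr"
  proof (cases "B = []")
    case True then show ?thesis using p rr_def jj_def js by simp
  next
    case False
    then have "jj rr = B ! 0" using rr_def jj_def js by (simp add: nth_append)
    moreover have "B ! 0 \<in> set B" using False by simp
    then have "B ! 0 \<in> set js" "p \<le> B ! 0" using B_def by auto
    ultimately show ?thesis using p(3) by (metis le_neq_implies_less)
  qed
  have dB: "drop (length A) js = B" using js by (metis append_eq_conv_conj)
  have s: "suf rr = Rf ws js p" unfolding suf_def rr_def Rf_def using dB B_def by simp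
  have imp: "jj (rr - 1) \<le> p \<and> p < jj rr \<and>
      perm_length n (stransp (ws ! (p - 1)) \<circ> suf rr) < perm_length n (suf rr) \<longrightarrow> p = jj (rr - 1)"
    using P(5) rr unfolding jj_def suf_def by blast
  have "p = jj (rr - 1)" using imp j1 j2 H unfolding s by simp
  with j1 show False by simp
qed

lemma step:
  assumes pds: "is_pos_dist_subexpr n ws v js" and lt: "set ws \<subseteq> {1..<n}"
    and p: "1 \<le> p" "p \<le> length ws"
  defines "j \<equiv> ws ! (p - 1)"
  shows "inv (Rf ws js (Suc p)) = sortstep j (inv (Rf ws js p))
     \<and> (p \<in> set js \<longleftrightarrow> inv (Rf ws js p) (Suc j) < inv (Rf ws js p) j)"
proof -
  note P = pds_unfold[OF pds]
  have "j \<in> set ws" using p j_def by (simp add: nth_mem)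
  then have jr: "1 \<le> j" "j < n" using lt by auto
  have Fs: "set (filter (\<lambda>j. q \<le> j) js) \<subseteq> {1..length ws}" for q using P(2) by auto
  have perm: "Rf ws js q permutes {1..n}" for q
    unfolding Rf_def using word_eval_perm sub_word_set[OF Fs] lt by (meson order_trans)
  show ?thesis
  proof (cases "p \<in> set js")
    case True
    have F: "filter (\<lambda>j. p \<le> j) js = p # filter (\<lambda>j. Suc p \<le> j) js"
      using F_step[OF P(1), of p] True by simp
    have R: "Rf ws js p = stransp j \<circ> Rf ws js (Suc p)"
      unfolding Rf_def F sub_word_Cons j_def by simp
    have R2: "stransp j \<circ> Rf ws js p = Rf ws js (Suc p)"
      unfolding R by (simp add: fun_eq_iff)
    have "perm_length n (Rf ws js p) = perm_length n (Rf ws js (Suc p)) + 1"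
      using lenR[OF pds lt, of p] lenR[OF pds lt, of "Suc p"] F by simp
    then have "perm_length n (stransp j \<circ> Rf ws js p) < perm_length n (Rf ws js p)"
      using R2 by simp
    then have d: "inv (Rf ws js p) (Suc j) < inv (Rf ws js p) j"
      using descent_iff[OF perm jr] by simp
    have "inv (Rf ws js (Suc p)) = inv (Rf ws js p) \<circ> stransp j"
      using inv_comp_stransp[OF perm[of p], of j] R2 by simp
    then show ?thesis using d True by (simp add: sortstep_def)
  next
    case False
    have F: "filter (\<lambda>j. p \<le> j) js = filter (\<lambda>j. Suc p \<le> j) js"
      using F_step[OF P(1), of p] False by simp
    have R: "Rf ws js p = Rf ws js (Suc p)" unfolding Rf_def F ..
    have "\<not> inv (Rf ws js p) (Suc j) < inv (Rf ws js p) j"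
      using nondesc[OF pds lt p False] descent_iff[OF perm jr] j_def by simp
    then show ?thesis using R False by (simp add: sortstep_def)
  qed
qed


theorem mainTheorem8:
  fixes n k i :: nat and w :: "nat \<Rightarrow> nat" and js :: "nat list"
  assumes "w permutes {1..n}"
    and "is_pos_dist_subexpr n (w0_word n) w js"
    and "2 \<le> k" and "k \<le> n - 1"
    and "1 \<le> i" and "i \<le> n - k"
    and "run_pos n k i \<in> set js"
  shows "run_pos n (k - 1) (i + 1) \<in> set js"
proof (rule ccontr)
  assume np: "run_pos n (k - 1) (i + 1) \<notin> set js"
  define ws where "ws = w0_word n"
  have lt: "set ws \<subseteq> {1..<n}" using w0_letters ws_def by simp
  have pds: "is_pos_dist_subexpr n ws w js" using assms(2) ws_def by simp
  define r where "r = (\<lambda>P. inv (Rf ws js P))"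
  define P0 where "P0 = run_pos n (k-1) 0"
  define L where "L = n - (k - 1)"
  have L2: "2 \<le> L" using assms(3,4) L_def by linarith
  have rp1: "run_pos n (k-1) t = P0 + t" for t using run_pos_0 P0_def by metis
  have rp2: "run_pos n k t = P0 + L + t" for t using run_pos_prev[OF assms(3)] P0_def L_def by metis
  have let1: "P0 + t - 1 < length ws \<and> ws ! (P0 + t - 1) = t" if "1 \<le> t" "t \<le> L" for t
    using w0_nth[of "k-1" n t] rp1[of t] that assms(3,4) L_def ws_def by simp
  have let2: "P0 + L + t - 1 < length ws \<and> ws ! (P0 + L + t - 1) = t" if "1 \<le> t" "t \<le> n - k" for t
    using w0_nth[of k n t] rp2[of t] that assms(3,4) ws_def by simp
  have stepP: "r (Suc P) = sortstep (ws ! (P - 1)) (r P) \<and>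
      (P \<in> set js \<longleftrightarrow> r P (Suc (ws ! (P - 1))) < r P (ws ! (P - 1)))"
    if "1 \<le> P" "P \<le> length ws" for P
    using step[OF pds lt that] r_def by simp
  have c1: "1 \<le> t \<longrightarrow> t \<le> i + 1 \<longrightarrow> Qc (r (P0 + t)) t" for t
  proof (induction t)
    case 0 show ?case by simp
  next
    case (Suc t)
    show ?case
    proof (cases "t = 0")
      case True then show ?thesis by (simp add: Qc_def)
    next
      case False
      show ?thesis
      proof (intro impI)
        assume h: "Suc t \<le> i + 1"
        then have Q: "Qc (r (P0 + t)) t" using Suc.IH False by simp
        have l: "P0 + t - 1 < length ws" "ws ! (P0 + t - 1) = t"
          using let1[of t] False h assms(6) L_def by auto
        have "r (Suc (P0 + t)) = sortstep t (r (P0 + t))"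
          using stepP[of "P0 + t"] l False by simp
        then show "Qc (r (P0 + Suc t)) (Suc t)" using Q_step[OF Q] False by simp
      qed
    qed
  qed
  define p where "p = P0 + (i + 1)"
  have pn: "p \<notin> set js" using np rp1 p_def by simp
  have lp: "p - 1 < length ws" "ws ! (p - 1) = i + 1"
    using let1[of "i+1"] p_def assms(3,4,6) L_def by auto
  have sp: "r (Suc p) = sortstep (i + 1) (r p)" "\<not> r p (Suc (i + 1)) < r p (i + 1)"
    using stepP[of p] lp pn p_def by auto
  then have rsp: "r (Suc p) = r p" by (simp add: sortstep_def)
  have Qp: "Qc (r (Suc p)) (i + 1)" using c1[of "i+1"] p_def rsp by simp
  define q where "q = P0 + L + i"
  have q_in: "q \<in> set js" using assms(7) rp2 q_def by simp
  have lq: "q - 1 < length ws" "ws ! (q - 1) = i"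
    using let2[of i] q_def assms(5,6) by auto
  have pq: "Suc p \<le> q" using p_def q_def L2 by simp
  have c2: "Suc p + d \<le> q \<longrightarrow> Qc (r (Suc p + d)) (i + 1)" for d
  proof (induction d)
    case 0 show ?case using Qp by simp
  next
    case (Suc d)
    show ?case
    proof
      assume h: "Suc p + Suc d \<le> q"
      define P where "P = Suc p + d"
      have QP: "Qc (r P) (i + 1)" using Suc.IH h P_def by simp
      have Pq: "P < q" using h P_def by simp
      have letter: "ws ! (P - 1) \<noteq> i \<and> ws ! (P - 1) \<noteq> i + 1 \<and> 1 \<le> ws ! (P - 1) \<and> P \<le> length ws"
      proof (cases "P \<le> P0 + L")
        case True
        define t where "t = P - P0"
        have t: "i + 2 \<le> t" "t \<le> L" "P = P0 + t" using True P_def p_def t_def by auto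
        then show ?thesis using let1[of t] by auto
      next
        case False
        define t where "t = P - (P0 + L)"
        have t: "1 \<le> t" "t < i" "P = P0 + L + t" using False Pq q_def t_def by auto
        then show ?thesis using let2[of t] assms(6) by auto
      qed
      have "r (Suc P) = sortstep (ws ! (P - 1)) (r P)" using stepP[of P] letter P_def by simp
      moreover have "Qc (sortstep (ws ! (P - 1)) (r P)) (i + 1)"
        using Q_pres[OF QP] letter by simp
      ultimately show "Qc (r (Suc p + Suc d)) (i + 1)" using P_def by simp
    qed
  qed
  have Qq: "Qc (r q) (i + 1)" using c2[of "q - Suc p"] pq by simp
  have "r q (Suc i) < r q i" using stepP[of q] q_in lq pq by simp
  moreover have "r q i \<le> r q (i + 1)" using Qq assms(5) unfolding Qc_def by simp
  ultimately show False by simp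
qed

end
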